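(* Let $G$ be a unimodular surface-like pseudolattice with point-like element $\mathsf p$ and Serre operator $S$, and let $f\in G$ be an element of rank zero with $\chi(f,f)=1$ (i.e. of self-intersection $-1$). Let $G_f={}^\perp f=\{v\in G\mid \chi(v,f)=0\}$ with the restricted pairing. Then $z:=(S-1)(f)$ lies in $\mathbb{Z}\mathsf p\subseteq G_f$, and the numerical blow-up $\operatorname{Bl}_z G_f=\mathbb{Z}g\oplus G_f$ is isometric to $G$ via the map sending $g\mapsto f$ and $v\mapsto v$ for $v\in G_f$.
   Context: A pseudolattice is a finitely generated free abelian group with a non-degenerate bilinear form $\chi$; unimodular means $\chi$ induces $G\cong\operatorname{Hom}(G,\mathbb{Z})$. Surface-like: there is a primitive $\mathsf p$ with $\chi(\mathsf p,\mathsf p)=0$, $\chi(\mathsf p,v)=\chi(v,\mathsf p)$ for all $v$, and $\chi$ symmetric on $\mathsf p^\perp$; rank $\mathsf r(v)=\chi(\mathsf p,v)$. A Serre operator is an isometry $S$ with $\chi(v,w)=\chi(w,S(v))$ for all $v,w$ (it exists and is unique for unimodular $G$). For $z\in\mathbb{Z}\mathsf p$, the numerical blow-up of a unimodular surface-like pseudolattice $H$ at $z$ is $\operatorname{Bl}_zH=\mathbb{Z}g\oplus H$ with pairing extending $\chi$ on $H$ by $\chi(g,g)=1$, $\chi(h,g)=0$ and $\chi(g,h)=\chi(z,h)$ for all $h\in H$. *)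

theory Defs
  imports Main "HOL-Library.Function_Algebras"
begin

text \<open>A finitely generated free abelian group is modelled as \<open>'n \<Rightarrow> int\<close>
  for a finite type \<open>'n\<close> (i.e. Z^n). Integer scalar multiplication:\<close>

definition zsc :: "int \<Rightarrow> ('n \<Rightarrow> int) \<Rightarrow> ('n \<Rightarrow> int)" where
  "zsc k v = (\<lambda>i. k * v i)"

definition additive_map :: "(('n::finite \<Rightarrow> int) \<Rightarrow> int) \<Rightarrow> bool" where
  "additive_map \<phi> \<longleftrightarrow> (\<forall>u v. \<phi> (u + v) = \<phi> u + \<phi> v)"

definition bilinear_form :: "(('n::finite \<Rightarrow> int) \<Rightarrow> ('n \<Rightarrow> int) \<Rightarrow> int) \<Rightarrow> bool" where
  "bilinear_form chi \<longleftrightarrow>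
     (\<forall>u v w. chi (u + v) w = chi u w + chi v w) \<and>
     (\<forall>u v w. chi u (v + w) = chi u v + chi u w)"

definition pseudolattice :: "(('n::finite \<Rightarrow> int) \<Rightarrow> ('n \<Rightarrow> int) \<Rightarrow> int) \<Rightarrow> bool" where
  "pseudolattice chi \<longleftrightarrow> bilinear_form chi \<and>
     (\<forall>v. (\<forall>w. chi v w = 0) \<longrightarrow> v = 0) \<and>
     (\<forall>w. (\<forall>v. chi v w = 0) \<longrightarrow> w = 0)"

definition unimodular :: "(('n::finite \<Rightarrow> int) \<Rightarrow> ('n \<Rightarrow> int) \<Rightarrow> int) \<Rightarrow> bool" where
  "unimodular chi \<longleftrightarrow> pseudolattice chi \<and>
     bij_betw (\<lambda>v. chi v) UNIV {\<phi>. additive_map \<phi>}"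

definition primitive :: "('n::finite \<Rightarrow> int) \<Rightarrow> bool" where
  "primitive p \<longleftrightarrow> p \<noteq> 0 \<and> (\<forall>k w. p = zsc k w \<longrightarrow> k = 1 \<or> k = -1)"

definition surface_like :: "(('n::finite \<Rightarrow> int) \<Rightarrow> ('n \<Rightarrow> int) \<Rightarrow> int) \<Rightarrow> ('n \<Rightarrow> int) \<Rightarrow> bool" where
  "surface_like chi p \<longleftrightarrow> pseudolattice chi \<and> primitive p \<and> chi p p = 0 \<and>
     (\<forall>v. chi p v = chi v p) \<and>
     (\<forall>v w. chi p v = 0 \<longrightarrow> chi p w = 0 \<longrightarrow> chi v w = chi w v)"

definition rk :: "(('n::finite \<Rightarrow> int) \<Rightarrow> ('n \<Rightarrow> int) \<Rightarrow> int) \<Rightarrow> ('n \<Rightarrow> int) \<Rightarrow> ('n \<Rightarrow> int) \<Rightarrow> int" where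
  "rk chi p v = chi p v"

definition isometry :: "(('n::finite \<Rightarrow> int) \<Rightarrow> ('n \<Rightarrow> int) \<Rightarrow> int) \<Rightarrow> (('n \<Rightarrow> int) \<Rightarrow> ('n \<Rightarrow> int)) \<Rightarrow> bool" where
  "isometry chi S \<longleftrightarrow> bij S \<and> (\<forall>u v. S (u + v) = S u + S v) \<and> (\<forall>v w. chi (S v) (S w) = chi v w)"

definition serre_operator :: "(('n::finite \<Rightarrow> int) \<Rightarrow> ('n \<Rightarrow> int) \<Rightarrow> int) \<Rightarrow> (('n \<Rightarrow> int) \<Rightarrow> ('n \<Rightarrow> int)) \<Rightarrow> bool" where
  "serre_operator chi S \<longleftrightarrow> isometry chi S \<and> (\<forall>v w. chi v w = chi w (S v))"

definition left_orth :: "(('n::finite \<Rightarrow> int) \<Rightarrow> ('n \<Rightarrow> int) \<Rightarrow> int) \<Rightarrow> ('n \<Rightarrow> int) \<Rightarrow> ('n \<Rightarrow> int) set" where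
  "left_orth chi f = {v. chi v f = 0}"

text \<open>Numerical blow-up Bl_z H = Z g \<oplus> H, elements written as pairs (a, h) = a g + h,
  with the bilinear extension of chi(g,g)=1, chi(h,g)=0, chi(g,h)=chi(z,h).\<close>
definition blowup_carrier :: "('n \<Rightarrow> int) set \<Rightarrow> (int \<times> ('n \<Rightarrow> int)) set" where
  "blowup_carrier H = UNIV \<times> H"

definition blowup_form ::
  "(('n::finite \<Rightarrow> int) \<Rightarrow> ('n \<Rightarrow> int) \<Rightarrow> int) \<Rightarrow> ('n \<Rightarrow> int) \<Rightarrow>
   int \<times> ('n \<Rightarrow> int) \<Rightarrow> int \<times> ('n \<Rightarrow> int) \<Rightarrow> int" where
  "blowup_form chi z x y = (case x of (a, h) \<Rightarrow> case y of (b, k) \<Rightarrow>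
      a * b * 1 + a * chi z k + b * 0 + chi h k)"

end

theory Submission
  imports Defs
begin

lemma addm_zero: fixes g :: "('n \<Rightarrow> int) \<Rightarrow> int"
  assumes "\<forall>u v. g (u+v) = g u + (g v :: int)" shows "g 0 = 0"
proof -
  have "g (0+0) = g 0 + g 0" using assms by blast
  thus ?thesis by simp
qed

lemma addm_neg: fixes g :: "('n \<Rightarrow> int) \<Rightarrow> int"
  assumes "\<forall>u v. g (u+v) = g u + (g v :: int)" shows "g (-u) = - g u"
proof -
  have "g (u + -u) = g u + g (-u)" using assms by blast
  thus ?thesis using addm_zero[OF assms] by simp
qed

lemma addm_diff: fixes g :: "('n \<Rightarrow> int) \<Rightarrow> int"
  assumes "\<forall>u v. g (u+v) = g u + (g v :: int)" shows "g (u - v) = g u - g v"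
proof -
  have "g (u + -v) = g u + g (-v)" using assms by blast
  thus ?thesis using addm_neg[OF assms] by simp
qed

lemma addm_zsc_nat: fixes g :: "('n \<Rightarrow> int) \<Rightarrow> int"
  assumes "\<forall>u v. g (u+v) = g u + (g v :: int)"
  shows "g (zsc (int n) v) = int n * g v"
proof (induction n)
  case 0
  have "zsc (int 0) v = 0" by (auto simp: zsc_def)
  then show ?case using addm_zero[OF assms] by simp
next
  case (Suc n)
  have "zsc (int (Suc n)) v = zsc (int n) v + v" by (auto simp: zsc_def algebra_simps)
  then have "g (zsc (int (Suc n)) v) = g (zsc (int n) v) + g v" using assms by simp
  then show ?case using Suc by (simp add: algebra_simps)
qed

lemma addm_zsc: fixes g :: "('n \<Rightarrow> int) \<Rightarrow> int"
  assumes "\<forall>u v. g (u+v) = g u + (g v :: int)"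
  shows "g (zsc k v) = k * g v"
proof (cases "k \<ge> 0")
  case True
  then obtain n where "k = int n" using nonneg_eq_int by blast
  then show ?thesis using addm_zsc_nat[OF assms] by simp
next
  case False
  then have "- k \<ge> 0" by simp
  then obtain n where "- k = int n" using nonneg_eq_int by blast
  then have n: "k = - int n" by simp
  have "zsc k v = - zsc (int n) v" by (auto simp: zsc_def n)
  then have "g (zsc k v) = g (- zsc (int n) v)" by simp
  also have "\<dots> = - g (zsc (int n) v)" by (rule addm_neg[OF assms])
  also have "\<dots> = k * g v" using addm_zsc_nat[OF assms] n by simp
  finally show ?thesis .
qed

theorem mainTheorem4:
  fixes chi :: "('n::finite \<Rightarrow> int) \<Rightarrow> ('n \<Rightarrow> int) \<Rightarrow> int"
    and p f :: "'n \<Rightarrow> int"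
    and S :: "('n \<Rightarrow> int) \<Rightarrow> ('n \<Rightarrow> int)"
  assumes "unimodular chi"
    and "surface_like chi p"
    and "serre_operator chi S"
    and "rk chi p f = 0"
    and "chi f f = 1"
  shows "(\<exists>k. S f - f = zsc k p)
    \<and> (\<forall>k. zsc k p \<in> left_orth chi f)
    \<and> bij_betw (\<lambda>(a, v). zsc a f + v) (blowup_carrier (left_orth chi f)) UNIV
    \<and> (\<forall>x\<in>blowup_carrier (left_orth chi f). \<forall>y\<in>blowup_carrier (left_orth chi f).
          (\<lambda>(a, v). zsc a f + v) (fst x + fst y, snd x + snd y)
            = (\<lambda>(a, v). zsc a f + v) x + (\<lambda>(a, v). zsc a f + v) y)
    \<and> (\<forall>x\<in>blowup_carrier (left_orth chi f). \<forall>y\<in>blowup_carrier (left_orth chi f).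
          chi ((\<lambda>(a, v). zsc a f + v) x) ((\<lambda>(a, v). zsc a f + v) y)
            = blowup_form chi (S f - f) x y)"
proof -
  have pl: "pseudolattice chi" and bij: "bij_betw (\<lambda>v. chi v) UNIV {\<phi>. additive_map \<phi>}"
    using assms(1) by (auto simp: unimodular_def)
  have L: "\<And>w. \<forall>u v. chi (u+v) w = chi u w + chi v w"
    and R: "\<And>u. \<forall>v w. chi u (v+w) = chi u v + chi u w"
    using pl by (auto simp: pseudolattice_def bilinear_form_def)
  have ndl: "\<And>v. (\<forall>w. chi v w = 0) \<Longrightarrow> v = 0"
   and ndr: "\<And>w. (\<forall>v. chi v w = 0) \<Longrightarrow> w = 0"
    using pl by (auto simp: pseudolattice_def)
  have prim: "primitive p" and psym: "\<And>v. chi p v = chi v p"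
   and sym0: "\<And>v w. chi p v = 0 \<Longrightarrow> chi p w = 0 \<Longrightarrow> chi v w = chi w v"
    using assms(2) by (auto simp: surface_like_def)
  have serre: "\<And>v w. chi v w = chi w (S v)" using assms(3) by (auto simp: serre_operator_def)
  have pf: "chi p f = 0" using assms(4) by (simp add: rk_def)
  have Lz: "\<And>k u w. chi (zsc k u) w = k * chi u w"
  proof -
    fix k u w
    show "chi (zsc k u) w = k * chi u w" using addm_zsc[of "\<lambda>x. chi x w", OF L] .
  qed
  have Rz: "\<And>k u w. chi u (zsc k w) = k * chi u w"
  proof -
    fix k u w
    show "chi u (zsc k w) = k * chi u w" using addm_zsc[of "chi u", OF R] .
  qed
  have Ld: "\<And>u v w. chi (u - v) w = chi u w - chi v w" using addm_diff[OF L] by blast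
  have Rd: "\<And>u v w. chi u (v - w) = chi u v - chi u w" using addm_diff[OF R] by blast
  \<comment> \<open>mu = chi p is surjective\<close>
  have "p \<noteq> 0" using prim by (simp add: primitive_def)
  then obtain w0 where w0: "chi p w0 \<noteq> 0" using ndl by blast
  define P where "P = (\<lambda>n::nat. n > 0 \<and> int n \<in> range (chi p))"
  have "\<exists>n. P n"
  proof (cases "chi p w0 > 0")
    case True
    then show ?thesis unfolding P_def
      by (rule_tac x="nat (chi p w0)" in exI) auto
  next
    case False
    have "chi p (-w0) = - chi p w0" using addm_neg[OF R] by blast
    then show ?thesis unfolding P_def using False w0
      by (rule_tac x="nat (chi p (-w0))" in exI) (auto intro!: image_eqI[where x="-w0"])
  qed
  define d where "d = (LEAST n. P n)"
  have Pd: "P d" unfolding d_def using \<open>\<exists>n. P n\<close> LeastI_ex by metis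
  then obtain e0 where e0: "chi p e0 = int d" and dpos: "d > 0" unfolding P_def by auto
  have dvd: "int d dvd chi p w" for w
  proof -
    define r where "r = chi p w mod int d"
    have "chi p (w - zsc (chi p w div int d) e0) = chi p w - (chi p w div int d) * int d"
      by (simp only: Rd Rz e0)
    also have "\<dots> = r" unfolding r_def by (rule minus_div_mult_eq_mod)
    finally have rr: "chi p (w - zsc (chi p w div int d) e0) = r" .
    have dp: "int d > 0" using dpos by simp
    have r0: "r \<ge> 0" "r < int d" unfolding r_def using pos_mod_sign[OF dp] pos_mod_bound[OF dp] by blast+
    show ?thesis
    proof (rule ccontr)
      assume nd: "\<not> ?thesis"
      have "r \<noteq> 0" using nd dvd_eq_mod_eq_0 unfolding r_def by blast
      then have rpos: "r > 0" using r0(1) by linarith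
      have "int (nat r) = chi p (w - zsc (chi p w div int d) e0)" using rr r0(1) by simp
      then have "int (nat r) \<in> range (chi p)" by (metis rangeI)
      then have "P (nat r)" unfolding P_def using rpos by simp
      then have "d \<le> nat r" unfolding d_def by (rule Least_le)
      then show False using r0 by simp
    qed
  qed
  define \<phi> where "\<phi> = (\<lambda>w. chi p w div int d)"
  have "additive_map \<phi>" unfolding additive_map_def \<phi>_def
    using R dvd by (simp add: div_plus_div_distrib_dvd_left)
  then have "\<phi> \<in> range (\<lambda>v. chi v)" using bij by (simp add: bij_betw_def)
  then obtain q where q: "chi q = \<phi>" by auto
  have "\<forall>w. chi (p - zsc (int d) q) w = 0"
    using Ld Lz q dvd unfolding \<phi>_def by simp
  then have "p - zsc (int d) q = 0" by (rule ndl)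
  then have "p = zsc (int d) q" by simp
  then have "int d = 1 \<or> int d = -1" using prim unfolding primitive_def by blast
  then have e: "chi p e0 = 1" using e0 by auto
  define z where "z = S f - f"
  have lam: "chi w z = chi f w - chi w f" for w
    unfolding z_def using Rd serre by simp
  define c where "c = chi e0 z"
  have lamker: "chi u z = 0" if "chi p u = 0" for u
    using lam sym0[OF that pf] by simp
  have lamc: "chi w z = chi p w * c" for w
  proof -
    have "chi p (w - zsc (chi p w) e0) = 0" using Rd Rz e by simp
    then have "chi (w - zsc (chi p w) e0) z = 0" by (rule lamker)
    then show ?thesis using Ld Lz unfolding c_def by simp
  qed
  have "\<forall>w. chi w (z - zsc c p) = 0"
  proof
    fix w
    show "chi w (z - zsc c p) = 0" using Rd Rz lamc[of w] psym[of w] by (simp add: mult.commute)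
  qed
  then have "z - zsc c p = 0" by (rule ndr)
  then have zc: "z = zsc c p" by simp
  have part1: "\<exists>k. S f - f = zsc k p" using zc unfolding z_def by blast
  have part2: "\<forall>k. zsc k p \<in> left_orth chi f" using Lz pf psym[of f] by (simp add: left_orth_def)
  have inj: "inj_on (\<lambda>(a, v). zsc a f + v) (blowup_carrier (left_orth chi f))"
  proof (rule inj_onI, clarify)
    fix a v b w
    assume v: "(a, v) \<in> blowup_carrier (left_orth chi f)" and w: "(b, w) \<in> blowup_carrier (left_orth chi f)"
      and eq: "zsc a f + v = zsc b f + w"
    have "chi v f = 0" "chi w f = 0" using v w by (auto simp: blowup_carrier_def left_orth_def)
    moreover have "chi (zsc a f + v) f = chi (zsc b f + w) f" using eq by simp
    ultimately have "a = b" using L Lz assms(5) by simp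
    then show "a = b \<and> v = w" using eq by simp
  qed
  have surj: "(\<lambda>(a, v). zsc a f + v) ` (blowup_carrier (left_orth chi f)) = UNIV"
  proof (rule set_eqI, rule iffI)
    fix u :: "'n \<Rightarrow> int"
    assume "u \<in> UNIV"
    have "chi (u - zsc (chi u f) f) f = 0" using Ld Lz assms(5) by simp
    then have "(chi u f, u - zsc (chi u f) f) \<in> blowup_carrier (left_orth chi f)"
      by (simp add: blowup_carrier_def left_orth_def)
    moreover have "u = (\<lambda>(a, v). zsc a f + v) (chi u f, u - zsc (chi u f) f)" by simp
    ultimately show "u \<in> (\<lambda>(a, v). zsc a f + v) ` (blowup_carrier (left_orth chi f))" by blast
  qed simp
  have part4: "\<forall>x\<in>blowup_carrier (left_orth chi f). \<forall>y\<in>blowup_carrier (left_orth chi f).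
          (\<lambda>(a, v). zsc a f + v) (fst x + fst y, snd x + snd y)
            = (\<lambda>(a, v). zsc a f + v) x + (\<lambda>(a, v). zsc a f + v) y"
  proof (intro ballI)
    fix x y :: "int \<times> ('n \<Rightarrow> int)"
    have zadd: "\<And>a b. zsc (a+b) f = zsc a f + zsc b f" by (simp add: zsc_def fun_eq_iff distrib_right)
    obtain a v where xv: "x = (a, v)" by (cases x)
    obtain b w where yw: "y = (b, w)" by (cases y)
    show "(\<lambda>(a, v). zsc a f + v) (fst x + fst y, snd x + snd y)
            = (\<lambda>(a, v). zsc a f + v) x + (\<lambda>(a, v). zsc a f + v) y"
      unfolding xv yw by (simp add: zadd add.assoc add.left_commute)
  qed
  have part5: "chi ((\<lambda>(a, v). zsc a f + v) x) ((\<lambda>(a, v). zsc a f + v) y)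
            = blowup_form chi (S f - f) x y"
    if x: "x \<in> blowup_carrier (left_orth chi f)" and y: "y \<in> blowup_carrier (left_orth chi f)" for x y
  proof -
    obtain a v where xv: "x = (a, v)" by (cases x)
    obtain b w where yw: "y = (b, w)" by (cases y)
    have vf: "chi v f = 0" and wf: "chi w f = 0"
      using x y unfolding xv yw blowup_carrier_def left_orth_def by simp_all
    have fw: "chi f w = chi z w"
    proof -
      have "chi f w = chi w z" using lam[of w] wf by linarith
      also have "\<dots> = chi p w * c" by (rule lamc)
      also have "\<dots> = chi z w" unfolding zc Lz by simp
      finally show ?thesis .
    qed
    have "chi (zsc a f + v) (zsc b f + w) = chi (zsc a f) (zsc b f + w) + chi v (zsc b f + w)"
      by (rule L[rule_format])
    also have "\<dots> = chi (zsc a f) (zsc b f) + chi (zsc a f) w + (chi v (zsc b f) + chi v w)"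
      by (simp only: R[rule_format] add.assoc)
    also have "\<dots> = b * (a * chi f f) + a * chi f w + (b * chi v f + chi v w)"
      by (simp only: Lz Rz)
    finally have eqn: "chi (zsc a f + v) (zsc b f + w) = a * b * chi f f + a * chi f w + b * chi v f + chi v w"
      by (simp add: ac_simps)
    show ?thesis unfolding xv yw blowup_form_def using eqn vf fw[unfolded z_def] assms(5) by simp
  qed
  have part3: "bij_betw (\<lambda>(a, v). zsc a f + v) (blowup_carrier (left_orth chi f)) UNIV"
    using inj surj by (simp only: bij_betw_def)
  show ?thesis
    apply (intro conjI)
        apply (rule part1)
       apply (rule part2)
      apply (rule part3)
     apply (rule part4)
    apply (intro ballI)
    apply (rule part5)
     apply assumption+
    done
qed

end
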